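(* Let $h,k\ge 2$, $w=a^hb^k$, and for $n\ge1$ let $S_n = a^h(a^{2h}b^{2k})(aba^{h-1}b^{k-1})^{n}(a^{2h}b^{2k})b^k$. For all integers $i,j\ge1$, $S_i \vdash^*_{\{w\}} S_j$ if and only if $i=j$.
   Context: For words $u,v$, the shuffle $u \sqcup\!\sqcup v$ is the set of all words $u_1v_1\cdots u_kv_k$ with $k\ge 1$, $u=u_1\cdots u_k$, $v=v_1\cdots v_k$ (pieces possibly empty). For a finite set $I$ of words, $v \vdash_I w$ means $w \in v \sqcup\!\sqcup u$ for some $u\in I$, and $\vdash_I^*$ is its reflexive-transitive closure. *)

theory Defs
  imports Main
begin

datatype letter = A | B

definition shuffle :: "'a list \<Rightarrow> 'a list \<Rightarrow> 'a list set" where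
  "shuffle u v = {w. \<exists>us vs. length us = length vs \<and> length us \<ge> 1 \<and>
      u = concat us \<and> v = concat vs \<and> w = concat (map (\<lambda>(x, y). x @ y) (zip us vs))}"

definition ins_step :: "'a list set \<Rightarrow> 'a list \<Rightarrow> 'a list \<Rightarrow> bool" where
  "ins_step I v w \<longleftrightarrow> (\<exists>u\<in>I. w \<in> shuffle v u)"

definition ins_star :: "'a list set \<Rightarrow> 'a list \<Rightarrow> 'a list \<Rightarrow> bool" where
  "ins_star I = (ins_step I)\<^sup>*\<^sup>*"

definition S_word :: "nat \<Rightarrow> nat \<Rightarrow> nat \<Rightarrow> letter list" where
  "S_word h k n = replicate h A @ (replicate (2*h) A @ replicate (2*k) B)
     @ concat (replicate n ([A, B] @ replicate (h - 1) A @ replicate (k - 1) B))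
     @ (replicate (2*h) A @ replicate (2*k) B) @ replicate k B"

end

theory Submission
  imports Defs
begin


lemma cl_rep[simp]: "count_list (replicate n x) y = (if x = y then n else 0)"
  by (induction n) auto

lemma shuf_pre_left: "b \<in> shuffles x2 y2 \<Longrightarrow> x1 @ b \<in> shuffles (x1 @ x2) y2"
  by (induction x1) (auto intro: Cons_in_shuffles_leftI)

lemma shuf_pre_right: "b \<in> shuffles x2 y2 \<Longrightarrow> y1 @ b \<in> shuffles x2 (y1 @ y2)"
  by (induction y1) (auto intro: Cons_in_shuffles_rightI)

lemma shuf_app: "a \<in> shuffles x1 y1 \<Longrightarrow> b \<in> shuffles x2 y2 \<Longrightarrow> a @ b \<in> shuffles (x1 @ x2) (y1 @ y2)"
proof (induction x1 y1 arbitrary: a rule: shuffles.induct)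
  case (1 ys)
  then show ?case by (simp add: shuf_pre_right)
next
  case (2 v va)
  then show ?case by (simp add: shuf_pre_left del: append.simps(2))
next
  case (3 x xs y ys)
  have "a \<in> (#) x ` shuffles xs (y # ys) \<union> (#) y ` shuffles (x # xs) ys" using "3.prems"(1) by simp
  then show ?case
  proof
    assume "a \<in> (#) x ` shuffles xs (y # ys)"
    then obtain a' where "a = x # a'" "a' \<in> shuffles xs (y # ys)" by auto
    then show ?thesis using "3.IH"(1)[OF _ "3.prems"(2)] by (auto intro: Cons_in_shuffles_leftI)
  next
    assume "a \<in> (#) y ` shuffles (x # xs) ys"
    then obtain a' where "a = y # a'" "a' \<in> shuffles (x # xs) ys" by auto
    then show ?thesis using "3.IH"(2)[OF _ "3.prems"(2)] by (auto intro: Cons_in_shuffles_rightI)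
  qed
qed

lemma shuf_self: "x @ y \<in> shuffles x y"
  using shuf_pre_left[of y "[]" y x] by simp

lemma concat_zip_shuffles:
  "length us = length vs \<Longrightarrow> concat (map (\<lambda>(x, y). x @ y) (zip us vs)) \<in> shuffles (concat us) (concat vs)"
proof (induction us arbitrary: vs)
  case Nil
  then show ?case by simp
next
  case (Cons u us)
  then obtain v vs' where "vs = v # vs'" by (cases vs) auto
  have "(u @ v) @ concat (map (\<lambda>(x, y). x @ y) (zip us vs')) \<in> shuffles (u @ concat us) (v @ concat vs')"
    by (rule shuf_app[OF shuf_self Cons.IH]) (use Cons.prems \<open>vs = v # vs'\<close> in simp)
  with \<open>vs = v # vs'\<close> show ?case by simp
qed

lemma shuffle_sub: "shuffle u v \<subseteq> shuffles u v"
  unfolding shuffle_def using concat_zip_shuffles by blast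

lemma shuf_count: "zs \<in> shuffles xs ys \<Longrightarrow> count_list zs x = count_list xs x + count_list ys x"
  by (induction xs ys arbitrary: zs rule: shuffles.induct) auto

lemma shuf_prefix: "zs \<in> shuffles xs ys \<Longrightarrow> zs = p @ q \<Longrightarrow>
   \<exists>p1 q1 p2 q2. xs = p1 @ q1 \<and> ys = p2 @ q2 \<and> p \<in> shuffles p1 p2"
proof (induction xs ys arbitrary: zs p rule: shuffles.induct)
  case (1 ys)
  then show ?case by (rule_tac x="[]" in exI) auto
next
  case (2 x xs)
  then show ?case by (rule_tac x="p" in exI, rule_tac x="q" in exI, rule_tac x="[]" in exI) auto
next
  case (3 x xs y ys)
  show ?case
  proof (cases p)
    case Nil
    then show ?thesis by (rule_tac x="[]" in exI, rule_tac x="x#xs" in exI, rule_tac x="[]" in exI) auto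
  next
    case (Cons z p')
    have "zs \<in> (#) x ` shuffles xs (y # ys) \<union> (#) y ` shuffles (x # xs) ys" using "3.prems"(1) by simp
    then show ?thesis
    proof
      assume "zs \<in> (#) x ` shuffles xs (y # ys)"
      then obtain a' where a': "zs = x # a'" "a' \<in> shuffles xs (y # ys)" by auto
      with Cons "3.prems"(2) have "a' = p' @ q" "z = x" by auto
      from "3.IH"(1)[OF a'(2) this(1)] obtain p1 q1 p2 q2 where
        "xs = p1 @ q1" "y # ys = p2 @ q2" "p' \<in> shuffles p1 p2" by blast
      then show ?thesis using Cons \<open>z = x\<close>
        by (rule_tac x="x # p1" in exI, rule_tac x="q1" in exI, rule_tac x="p2" in exI)
           (auto intro: Cons_in_shuffles_leftI)
    next
      assume "zs \<in> (#) y ` shuffles (x # xs) ys"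
      then obtain a' where a': "zs = y # a'" "a' \<in> shuffles (x # xs) ys" by auto
      with Cons "3.prems"(2) have "a' = p' @ q" "z = y" by auto
      from "3.IH"(2)[OF a'(2) this(1)] obtain p1 q1 p2 q2 where
        "x # xs = p1 @ q1" "ys = p2 @ q2" "p' \<in> shuffles p1 p2" by blast
      then show ?thesis using Cons \<open>z = y\<close>
        by (rule_tac x="p1" in exI, rule_tac x="q1" in exI, rule_tac x="y # p2" in exI)
           (auto intro: Cons_in_shuffles_rightI)
    qed
  qed
qed

lemma shuf_lift: "zs \<in> shuffles xs ys \<Longrightarrow> map fst cx = xs \<Longrightarrow> map fst cy = ys \<Longrightarrow>
   \<exists>cz \<in> shuffles cx cy. map fst cz = zs"
proof (induction cx cy arbitrary: zs xs ys rule: shuffles.induct)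
  case (1 ys)
  then show ?case by auto
next
  case (2 x xs)
  then show ?case by auto
next
  case (3 x xs y ys zs xs0 ys0)
  then have e: "xs0 = fst x # map fst xs" "ys0 = fst y # map fst ys" by auto
  have "zs \<in> (#) (fst x) ` shuffles (map fst xs) (fst y # map fst ys) \<union> (#) (fst y) ` shuffles (fst x # map fst xs) (map fst ys)"
    using "3.prems"(1) e by simp
  then show ?case
  proof
    assume "zs \<in> (#) (fst x) ` shuffles (map fst xs) (fst y # map fst ys)"
    then obtain a' where a': "zs = fst x # a'" "a' \<in> shuffles (map fst xs) (fst y # map fst ys)" by auto
    from "3.IH"(1)[OF a'(2)] obtain cz where "cz \<in> shuffles xs (y # ys)" "map fst cz = a'" by auto
    then show ?thesis using a' by (rule_tac x="x # cz" in bexI) auto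
  next
    assume "zs \<in> (#) (fst y) ` shuffles (fst x # map fst xs) (map fst ys)"
    then obtain a' where a': "zs = fst y # a'" "a' \<in> shuffles (fst x # map fst xs) (map fst ys)" by auto
    from "3.IH"(2)[OF a'(2)] obtain cz where "cz \<in> shuffles (x # xs) ys" "map fst cz = a'" by auto
    then show ?thesis using a' by (rule_tac x="y # cz" in bexI) auto
  qed
qed



definition redw :: "(letter \<times> bool) list \<Rightarrow> letter list" where
  "redw c = map fst (filter (\<lambda>x. \<not> snd x) c)"

definition binv :: "nat \<Rightarrow> nat \<Rightarrow> (letter \<times> bool) list \<Rightarrow> bool" where
  "binv h k c \<longleftrightarrow> (\<forall>p q. c = p @ q \<longrightarrow>
     (0 < count_list p (B, True) \<longrightarrow> h \<le> count_list p (A, True)) \<and>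
     h * count_list p (B, True) \<le> k * count_list p (A, True))"

lemma redw_append[simp]: "redw (xs @ ys) = redw xs @ redw ys"
  by (simp add: redw_def)

lemma redw_Nil[simp]: "redw [] = []" by (simp add: redw_def)

lemma cnt_split: "count_list (map fst c) l = count_list (redw c) l + count_list c (l, True)"
  by (induction c) (auto simp: redw_def)

lemma len_split: "length c = length (redw c) + count_list c (A, True) + count_list c (B, True)"
proof (induction c)
  case Nil
  then show ?case by simp
next
  case (Cons x c)
  obtain l b where "x = (l, b)" by (cases x)
  then show ?case using Cons by (cases l; cases b) (auto simp: redw_def)
qed

lemma bluefree: "count_list c (A, True) = 0 \<Longrightarrow> count_list c (B, True) = 0 \<Longrightarrow> redw c = map fst c"
proof (induction c)
  case Nil
  then show ?case by simp
next
  case (Cons x c)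
  obtain l b where "x = (l, b)" by (cases x)
  then show ?case using Cons by (cases l; cases b) (auto simp: redw_def split: if_splits)
qed

lemma binv_strip: "binv h k (p @ c) \<Longrightarrow> count_list p (A, True) = 0 \<Longrightarrow> count_list p (B, True) = 0 \<Longrightarrow> binv h k c"
  unfolding binv_def
proof (intro allI impI)
  fix p' q
  assume H: "\<forall>pa q. p @ c = pa @ q \<longrightarrow>
          (0 < count_list pa (B, True) \<longrightarrow> h \<le> count_list pa (A, True)) \<and>
          h * count_list pa (B, True) \<le> k * count_list pa (A, True)"
    and z: "count_list p (A, True) = 0" "count_list p (B, True) = 0" and e: "c = p' @ q"
  from H[rule_format, of "p @ p'" q] e z show
    "(0 < count_list p' (B, True) \<longrightarrow> h \<le> count_list p' (A, True)) \<and>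
       h * count_list p' (B, True) \<le> k * count_list p' (A, True)" by simp
qed

lemma binvD: "binv h k c \<Longrightarrow> c = p @ q \<Longrightarrow>
   (0 < count_list p (B, True) \<longrightarrow> h \<le> count_list p (A, True)) \<and>
     h * count_list p (B, True) \<le> k * count_list p (A, True)"
  unfolding binv_def by blast

definition bw :: "nat \<Rightarrow> nat \<Rightarrow> (letter \<times> bool) list" where
  "bw h k = map (\<lambda>l. (l, True)) (replicate h A @ replicate k B)"

lemma bw_prefix: assumes "bw h k = p2 @ q2"
  shows "(0 < count_list p2 (B, True) \<longrightarrow> count_list p2 (A, True) = h) \<and>
     h * count_list p2 (B, True) \<le> k * count_list p2 (A, True)"
proof -
  let ?n = "length p2"
  have "p2 = take ?n (bw h k)" using assms by simp
  also have "\<dots> = map (\<lambda>l. (l, True)) (replicate (min ?n h) A @ replicate (min (?n - h) k) B)"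
    by (simp add: bw_def take_map)
  finally have p2: "p2 = \<dots>" .
  have cA: "count_list p2 (A, True) = min ?n h" and cB: "count_list p2 (B, True) = min (?n - h) k"
    by (subst p2; simp add: count_list_map_conv inj_def)+
  show ?thesis
  proof (cases "?n \<le> h")
    case True
    then show ?thesis using cA cB by simp
  next
    case False
    then have "count_list p2 (A, True) = h" using cA by simp
    moreover have "h * count_list p2 (B, True) \<le> h * k" using cB by simp
    ultimately show ?thesis by (simp add: mult.commute)
  qed
qed

lemma binv_shuffle: assumes "binv h k c" "c' \<in> shuffles c (bw h k)"
  shows "binv h k c'"
  unfolding binv_def
proof (intro allI impI)
  fix p q assume "c' = p @ q"
  from shuf_prefix[OF assms(2) this] obtain p1 q1 p2 q2 where
    s: "c = p1 @ q1" "bw h k = p2 @ q2" "p \<in> shuffles p1 p2" by blast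
  have cnt: "count_list p x = count_list p1 x + count_list p2 x" for x using shuf_count[OF s(3)] .
  from binvD[OF assms(1) s(1)] have I1: "(0 < count_list p1 (B, True) \<longrightarrow> h \<le> count_list p1 (A, True))"
    and I2: "h * count_list p1 (B, True) \<le> k * count_list p1 (A, True)" by auto
  from bw_prefix[OF s(2)] have J1: "(0 < count_list p2 (B, True) \<longrightarrow> count_list p2 (A, True) = h)"
    and J2: "h * count_list p2 (B, True) \<le> k * count_list p2 (A, True)" by auto
  show "(0 < count_list p (B, True) \<longrightarrow> h \<le> count_list p (A, True)) \<and>
       h * count_list p (B, True) \<le> k * count_list p (A, True)"
    unfolding cnt using I1 I2 J1 J2 by (auto simp: algebra_simps)
qed

lemma cnt_red_map[simp]: "count_list (map (\<lambda>l. (l, False)) us) (x, True) = 0"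
  by (induction us) auto

lemma colored:
  assumes "ins_star {replicate h A @ replicate k B} x y"
  shows "\<exists>c. map fst c = y \<and> redw c = x \<and> binv h k c"
  using assms unfolding ins_star_def
proof (induction rule: rtranclp_induct)
  case base
  show ?case
    by (rule exI[of _ "map (\<lambda>l. (l, False)) x"])
       (auto simp: redw_def binv_def comp_def map_eq_append_conv count_list_0_iff)
next
  case (step y z)
  then obtain c where c: "map fst c = y" "redw c = x" "binv h k c" by blast
  from step(2) have "z \<in> shuffles y (replicate h A @ replicate k B)"
    unfolding ins_step_def using shuffle_sub by blast
  from shuf_lift[OF this c(1), of "bw h k"] obtain cz where
    cz: "cz \<in> shuffles c (bw h k)" "map fst cz = z" by (auto simp: bw_def comp_def)
  have "filter (\<lambda>x. \<not> snd x) cz \<in> shuffles (filter (\<lambda>x. \<not> snd x) c) (filter (\<lambda>x. \<not> snd x) (bw h k))"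
    using filter_shuffles[of "\<lambda>x. \<not> snd x" c "bw h k"] cz(1) by blast
  moreover have "filter (\<lambda>x. \<not> snd x) (bw h k) = []" by (simp add: bw_def)
  ultimately have "redw cz = redw c" by (simp add: redw_def)
  then show ?case using cz c binv_shuffle[OF c(3) cz(1)] by auto
qed



definition Pw :: "nat \<Rightarrow> nat \<Rightarrow> letter list" where
  "Pw h k = [A, B] @ replicate (h - 1) A @ replicate (k - 1) B"

lemma S_alt: "S_word h k n = replicate (3*h) A @ replicate (2*k) B @ concat (replicate n (Pw h k))
   @ replicate (2*h) A @ replicate (3*k) B"
proof -
  have 1: "replicate (3*h) A = replicate h A @ replicate (2*h) A" by (simp add: replicate_add[symmetric])
  have 2: "replicate (3*k) B = replicate (2*k) B @ replicate k B" by (simp add: replicate_add[symmetric])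
  show ?thesis unfolding S_word_def 1 2 Pw_def by simp
qed

lemma cnt_concat_rep: "count_list (concat (replicate c xs)) x = c * count_list xs x"
  by (induction c) auto

lemma cnt_Pw: "1 \<le> h \<Longrightarrow> 1 \<le> k \<Longrightarrow> count_list (Pw h k) A = h \<and> count_list (Pw h k) B = k"
  by (simp add: Pw_def)

lemma len_Pw: "1 \<le> h \<Longrightarrow> 1 \<le> k \<Longrightarrow> length (Pw h k) = h + k"
  by (simp add: Pw_def)

lemma prefix_rep: "y @ z = replicate n x \<Longrightarrow> \<exists>s. y = replicate s x \<and> s \<le> n"
proof -
  assume a: "y @ z = replicate n x"
  then have "set y \<subseteq> set (replicate n x)" by (metis set_append Un_upper1)
  also have "\<dots> \<subseteq> {x}" by auto
  finally have "set y \<subseteq> {x}" .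
  then have "replicate (length y) x = y" by (intro replicate_length_same) auto
  moreover have "length y \<le> n" using arg_cong[OF a, of length] by simp
  ultimately show ?thesis by (intro exI[of _ "length y"]) simp
qed

lemma prefix_concat_rep: "y @ z = concat (replicate n P) \<Longrightarrow>
   \<exists>c q r. c \<le> n \<and> y = concat (replicate c P) @ q \<and> q @ r = P"
proof (induction n arbitrary: y z)
  case 0
  then show ?case by auto
next
  case (Suc n)
  then have "y @ z = P @ concat (replicate n P)" by simp
  then obtain us where "y = P @ us \<and> us @ z = concat (replicate n P) \<or> y @ us = P \<and> z = us @ concat (replicate n P)"
    unfolding append_eq_append_conv2 by blast
  then show ?case
  proof
    assume HH: "y = P @ us \<and> us @ z = concat (replicate n P)"
    with Suc.IH obtain c q r where "c \<le> n" "us = concat (replicate c P) @ q" "q @ r = P" by blast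
    then show ?thesis using HH by (rule_tac x="Suc c" in exI) auto
  next
    assume "y @ us = P \<and> z = us @ concat (replicate n P)"
    then show ?thesis by (rule_tac x=0 in exI) auto
  qed
qed

lemma Pq_bound: assumes "q @ r = Pw h k" "1 \<le> h" "1 \<le> k"
  shows "k * count_list q A < h * count_list q B + 2*h*k"
proof -
  have "count_list q A + count_list r A = h" using arg_cong[OF assms(1), of "\<lambda>x. count_list x A"] cnt_Pw[OF assms(2,3)] by simp
  then have qa: "count_list q A \<le> h" by simp
  show ?thesis
  proof (cases "count_list q B = 0")
    case True
    have "length q \<le> 1"
    proof (rule ccontr)
      assume "\<not> length q \<le> 1"
      then obtain a1 a2 q' where "q = a1 # a2 # q'" by (cases q; cases "tl q") auto
      with assms(1) have "a2 = B" by (simp add: Pw_def)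
      with \<open>q = a1 # a2 # q'\<close> True show False by (simp split: if_splits)
    qed
    then have "count_list q A \<le> 1" using count_le_length[of q A] by simp
    then have "k * count_list q A \<le> k" by simp
    moreover have "k < 2*h*k" using assms(2,3) by simp
    ultimately show ?thesis by linarith
  next
    case False
    have "k * count_list q A \<le> k * h" using qa by simp
    moreover have "h \<le> h * count_list q B" using False by simp
    moreover have "k * h < h + 2*h*k" using assms(2,3) by (simp add: algebra_simps)
    ultimately show ?thesis by linarith
  qed
qed

lemma Dbound:
  assumes "y @ z = replicate (3*h) A @ replicate (2*k) B @ concat (replicate n (Pw h k))
   @ replicate (2*h) A @ replicate (3*k) B" "1 \<le> h" "1 \<le> k"
  shows "k * count_list y A \<le> h * count_list y B + 3*h*k \<and>
    (k * count_list y A = h * count_list y B + 3*h*k \<longrightarrow> count_list y B = 0 \<or> count_list y A = (5+n)*h)"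
proof -
  let ?C = "concat (replicate n (Pw h k))"
  from assms(1) obtain u1 where "y = replicate (3*h) A @ u1 \<and> u1 @ z = replicate (2*k) B @ ?C @ replicate (2*h) A @ replicate (3*k) B
     \<or> y @ u1 = replicate (3*h) A \<and> z = u1 @ replicate (2*k) B @ ?C @ replicate (2*h) A @ replicate (3*k) B"
    unfolding append_eq_append_conv2 by blast
  then show ?thesis
  proof
    assume G: "y @ u1 = replicate (3*h) A \<and> z = u1 @ replicate (2*k) B @ ?C @ replicate (2*h) A @ replicate (3*k) B"
    obtain s where es: "y = replicate s A" "s \<le> 3*h" using prefix_rep[OF G[THEN conjunct1]] by blast
    then have ya: "count_list y A = s" and yb: "count_list y B = 0" by simp_all
    have "k * s \<le> k * (3*h)" using es(2) by simp
    then show ?thesis unfolding ya yb by (simp add: algebra_simps)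
  next
    assume H1: "y = replicate (3*h) A @ u1 \<and> u1 @ z = replicate (2*k) B @ ?C @ replicate (2*h) A @ replicate (3*k) B"
    then obtain u2 where "u1 = replicate (2*k) B @ u2 \<and> u2 @ z = ?C @ replicate (2*h) A @ replicate (3*k) B
      \<or> u1 @ u2 = replicate (2*k) B"
      unfolding append_eq_append_conv2 by blast
    then show ?thesis
    proof
      assume G: "u1 @ u2 = replicate (2*k) B"
      obtain t where e: "u1 = replicate t B" using prefix_rep[OF G] by blast
      have "count_list y A = 3*h" "count_list y B = t" using H1[THEN conjunct1] e by simp_all
      then show ?thesis by simp
    next
      assume H2: "u1 = replicate (2*k) B @ u2 \<and> u2 @ z = ?C @ replicate (2*h) A @ replicate (3*k) B"
      then obtain u3 where "u2 = ?C @ u3 \<and> u3 @ z = replicate (2*h) A @ replicate (3*k) B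
        \<or> u2 @ u3 = ?C"
        unfolding append_eq_append_conv2 by blast
      then show ?thesis
      proof
        assume G: "u2 @ u3 = ?C"
        obtain c q r where cq: "c \<le> n" "u2 = concat (replicate c (Pw h k)) @ q" "q @ r = Pw h k"
          using prefix_concat_rep[OF G] by blast
        have ya: "count_list y A = 3*h + c*h + count_list q A"
          using H1[THEN conjunct1] H2[THEN conjunct1] cq(2) cnt_Pw[OF assms(2,3)] by (simp add: cnt_concat_rep)
        have yb: "count_list y B = 2*k + c*k + count_list q B"
          using H1[THEN conjunct1] H2[THEN conjunct1] cq(2) cnt_Pw[OF assms(2,3)] by (simp add: cnt_concat_rep)
        have bq: "k * count_list q A < h * count_list q B + 2*h*k" using Pq_bound[OF cq(3) assms(2,3)] .
        have "k * count_list y A = 3*h*k + c*h*k + k * count_list q A" unfolding ya by (simp add: algebra_simps)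
        moreover have "h * count_list y B + 3*h*k = 2*h*k + c*h*k + h * count_list q B + 3*h*k"
          unfolding yb by (simp add: algebra_simps)
        ultimately show ?thesis using bq by linarith
      next
        assume H3: "u2 = ?C @ u3 \<and> u3 @ z = replicate (2*h) A @ replicate (3*k) B"
        then obtain u4 where "u3 = replicate (2*h) A @ u4 \<and> u4 @ z = replicate (3*k) B
          \<or> u3 @ u4 = replicate (2*h) A"
          unfolding append_eq_append_conv2 by blast
        then show ?thesis
        proof
          assume G: "u3 @ u4 = replicate (2*h) A"
          obtain s where es: "u3 = replicate s A" "s \<le> 2*h" using prefix_rep[OF G] by blast
          have ya: "count_list y A = 3*h + n*h + s"
            using H1[THEN conjunct1] H2[THEN conjunct1] H3[THEN conjunct1] cnt_Pw[OF assms(2,3)] es(1) by (simp add: cnt_concat_rep)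
          have yb: "count_list y B = 2*k + n*k"
            using H1[THEN conjunct1] H2[THEN conjunct1] H3[THEN conjunct1] cnt_Pw[OF assms(2,3)] es(1) by (simp add: cnt_concat_rep)
          have "k * s \<le> k * (2*h)" using es(2) by simp
          then have l: "k * s \<le> 2*h*k" by (simp add: algebra_simps)
          have "k * count_list y A = 3*h*k + n*h*k + k * s" unfolding ya by (simp add: algebra_simps)
          moreover have "h * count_list y B + 3*h*k = 2*h*k + n*h*k + 3*h*k"
            unfolding yb by (simp add: algebra_simps)
          moreover have "k * s = 2*h*k \<Longrightarrow> s = 2*h"
          proof -
            assume "k * s = 2*h*k"
            then have "k * s = k * (2*h)" by (simp add: algebra_simps)
            then show "s = 2*h" using assms(3) by simp
          qed
          moreover have "3*h + n*h + 2*h = (5+n)*h" by (simp add: algebra_simps)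
          ultimately have le: "k * count_list y A \<le> h * count_list y B + 3*h*k"
            and F: "k * count_list y A = h * count_list y B + 3*h*k \<Longrightarrow> k * s = 2*h*k"
            and G: "k * s = 2*h*k \<Longrightarrow> s = 2*h"
            and H: "3*h + n*h + 2*h = (5+n)*h"
            using l by linarith+
          have eq: "k * count_list y A = h * count_list y B + 3*h*k \<Longrightarrow> count_list y A = (5+n)*h"
          proof -
            assume "k * count_list y A = h * count_list y B + 3*h*k"
            then have "s = 2*h" using F G by blast
            then show ?thesis using ya H by simp
          qed
          show ?thesis using le eq by blast
        next
          assume H4: "u3 = replicate (2*h) A @ u4 \<and> u4 @ z = replicate (3*k) B"
          obtain s where es: "u4 = replicate s B" using prefix_rep[OF H4[THEN conjunct2]] by blast
          have ya: "count_list y A = 3*h + n*h + 2*h"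
            using H1[THEN conjunct1] H2[THEN conjunct1] H3[THEN conjunct1] H4[THEN conjunct1] cnt_Pw[OF assms(2,3)] es by (simp add: cnt_concat_rep)
          have yb: "count_list y B = 2*k + n*k + s"
            using H1[THEN conjunct1] H2[THEN conjunct1] H3[THEN conjunct1] H4[THEN conjunct1] cnt_Pw[OF assms(2,3)] es by (simp add: cnt_concat_rep)
          have "k * count_list y A = 5*h*k + n*h*k" unfolding ya by (simp add: algebra_simps)
          moreover have "h * count_list y B + 3*h*k = 5*h*k + n*h*k + h * s"
            unfolding yb by (simp add: algebra_simps)
          moreover have "3*h + n*h + 2*h = (5+n)*h" by (simp add: algebra_simps)
          ultimately have le: "k * count_list y A \<le> h * count_list y B + 3*h*k"
            and H: "3*h + n*h + 2*h = (5+n)*h" by linarith+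
          have "count_list y A = (5+n)*h" using ya H by simp
          then show ?thesis using le by blast
        qed
      qed
    qed
  qed
qed



lemma cA_le: "count_list c (l, True) \<le> count_list (map fst c) (l::letter)"
  using cnt_split[of c l] by simp

lemma filter_split: "filter P c = F1 @ F2 \<Longrightarrow> \<exists>c1 c2. c = c1 @ c2 \<and> filter P c1 = F1 \<and> filter P c2 = F2"
proof (induction c arbitrary: F1)
  case Nil
  then show ?case by simp
next
  case (Cons x c)
  show ?case
  proof (cases "P x")
    case True
    show ?thesis
    proof (cases F1)
      case Nil
      then show ?thesis using Cons.prems by (rule_tac x="[]" in exI) auto
    next
      case (Cons f F1')
      with Cons.prems True have "f = x" "filter P c = F1' @ F2" by auto
      from Cons.IH[OF this(2)] obtain c1 c2 where "c = c1 @ c2" "filter P c1 = F1'" "filter P c2 = F2" by blast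
      then show ?thesis using True \<open>f = x\<close> \<open>F1 = f # F1'\<close> by (rule_tac x="x # c1" in exI) auto
    qed
  next
    case False
    with Cons.prems have "filter P c = F1 @ F2" by simp
    from Cons.IH[OF this] obtain c1 c2 where "c = c1 @ c2" "filter P c1 = F1" "filter P c2 = F2" by blast
    then show ?thesis using False by (rule_tac x="x # c1" in exI) auto
  qed
qed

lemma take2_red: assumes "count_list (take n d) (A, True) = 0" "count_list (take n d) (B, True) = 0"
  shows "redw d = take n (map fst d) @ redw (drop n d)"
proof -
  have "redw d = redw (take n d) @ redw (drop n d)" by (metis append_take_drop_id redw_append)
  also have "redw (take n d) = map fst (take n d)" using bluefree[OF assms] .
  finally show ?thesis by (simp add: take_map)
qed

lemma L2: assumes "binv h k d" "2 \<le> h" "map fst d = A # B # ys" "redw d = A # xs"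
  shows "count_list (take 2 d) (A, True) = 0 \<and> count_list (take 2 d) (B, True) = 0"
proof -
  let ?q = "take 2 d"
  have mq: "map fst ?q = [A, B]" using assms(3) take_map[of 2 fst d] by simp
  have cb: "1 = count_list (redw ?q) B + count_list ?q (B, True)" using cnt_split[of ?q B] mq by simp
  have ca: "1 = count_list (redw ?q) A + count_list ?q (A, True)" using cnt_split[of ?q A] mq by simp
  have I: "0 < count_list ?q (B, True) \<longrightarrow> h \<le> count_list ?q (A, True)"
    using binvD[OF assms(1), of ?q "drop 2 d"] by simp
  have b0: "count_list ?q (B, True) = 0" using I ca assms(2) by linarith
  then have "count_list (redw ?q) B = 1" using cb by simp
  then have ne: "redw ?q \<noteq> []" by auto
  have "redw d = redw ?q @ redw (drop 2 d)" by (metis append_take_drop_id redw_append)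
  with ne assms(4) obtain t where "redw ?q = A # t" by (cases "redw ?q") auto
  then have "count_list (redw ?q) A \<ge> 1" by simp
  then have "count_list ?q (A, True) = 0" using ca by linarith
  with b0 show ?thesis by simp
qed

lemma W2: assumes "binv h k d" "2 \<le> h" "2 \<le> k" "map fst d = Pw h k @ Yr" "redw d = Pw h k @ Xr"
  shows "count_list (take (h+k) d) (A, True) = 0 \<and> count_list (take (h+k) d) (B, True) = 0"
proof -
  have h1: "1 \<le> h" "1 \<le> k" using assms(2,3) by auto
  have PwC: "Pw h k = A # B # (replicate (h-1) A @ replicate (k-1) B)" by (simp add: Pw_def)
  have lP: "length (Pw h k) = h + k" using len_Pw[OF h1] .
  from L2[OF assms(1,2)] assms(4,5) PwC have q0: "count_list (take 2 d) (A, True) = 0" "count_list (take 2 d) (B, True) = 0"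
    by auto
  let ?p = "take (h+k) d"
  have mp: "map fst ?p = Pw h k" using assms(4) lP take_map[of "h+k" fst d] by simp
  have ca: "h = count_list (redw ?p) A + count_list ?p (A, True)"
    using cnt_split[of ?p A] mp cnt_Pw[OF h1] by simp
  have cb: "k = count_list (redw ?p) B + count_list ?p (B, True)"
    using cnt_split[of ?p B] mp cnt_Pw[OF h1] by simp
  have t2: "take 2 ?p = take 2 d" using assms(2,3) by (simp add: min_def)
  have "redw ?p = redw (take 2 ?p) @ redw (drop 2 ?p)" by (metis append_take_drop_id redw_append)
  also have "redw (take 2 ?p) = map fst (take 2 d)" using bluefree[OF q0] t2 by simp
  also have "map fst (take 2 d) = [A, B]" using assms(4) PwC take_map[of 2 fst d] by simp
  finally have "count_list (redw ?p) A \<ge> 1" by simp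
  then have "count_list ?p (A, True) < h" using ca by linarith
  moreover have "0 < count_list ?p (B, True) \<longrightarrow> h \<le> count_list ?p (A, True)"
    using binvD[OF assms(1), of ?p "drop (h+k) d"] by simp
  ultimately have b0: "count_list ?p (B, True) = 0" by linarith
  have lp: "length ?p = h + k" using arg_cong[OF assms(4), of length] lP by simp
  have ls: "length ?p = length (redw ?p) + count_list ?p (A, True) + count_list ?p (B, True)"
    using len_split .
  have rd: "redw d = redw ?p @ redw (drop (h+k) d)" by (metis append_take_drop_id redw_append)
  have "count_list ?p (A, True) = 0"
  proof (rule ccontr)
    assume "count_list ?p (A, True) \<noteq> 0"
    then have L: "length (redw ?p) < h + k" using lp ls by linarith
    have "redw ?p = take (length (redw ?p)) (Pw h k @ Xr)" using rd assms(5) by (metis append_eq_conv_conj)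
    then have e: "redw ?p = take (length (redw ?p)) (Pw h k)" using L lP by simp
    let ?L = "length (redw ?p)"
    have "Pw h k = take ?L (Pw h k) @ drop ?L (Pw h k)" by simp
    then have "k = count_list (take ?L (Pw h k)) B + count_list (drop ?L (Pw h k)) B"
      using cnt_Pw[OF h1] by (metis count_list_append)
    moreover have "last (drop ?L (Pw h k)) = B"
      using L lP assms(3) by (simp add: Pw_def last_append)
    then have "B \<in> set (drop ?L (Pw h k))" using L lP
      by (metis last_in_set drop_eq_Nil not_le)
    then have "count_list (drop ?L (Pw h k)) B \<ge> 1" by (metis count_list_0_iff less_one not_le)
    ultimately have "count_list (redw ?p) B < k" using e by simp
    then show False using cb b0 by simp
  qed
  with b0 show ?thesis by simp
qed



lemma W1: assumes "binv h k c" "2 \<le> h" "2 \<le> k"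
  "map fst c = replicate (3*h) A @ replicate (2*k) B @ concat (replicate j (Pw h k)) @ replicate (2*h) A @ replicate (3*k) B"
  "redw c = replicate (3*h) A @ replicate (2*k) B @ Xr"
  "count_list c (A, True) < (2+j)*h"
  shows "count_list (take (3*h+2*k) c) (A, True) = 0 \<and> count_list (take (3*h+2*k) c) (B, True) = 0"
proof -
  have h1: "1 \<le> h" "1 \<le> k" using assms(2,3) by auto
  let ?P = "\<lambda>x::letter \<times> bool. \<not> snd x"
  have "2*k = Suc (2*k-1)" using assms(3) by simp
  then have rk: "replicate (2*k) B = B # replicate (2*k-1) B" by (metis replicate_Suc)
  have mf: "map fst (filter ?P c) = replicate (3*h) A @ B # (replicate (2*k-1) B @ Xr)"
    using assms(5) rk by (simp add: redw_def)
  have lf: "3*h \<le> length (filter ?P c)" using arg_cong[OF mf, of length] by simp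
  define F1 where "F1 = take (3*h) (filter ?P c)"
  define F2 where "F2 = drop (3*h) (filter ?P c)"
  have F: "filter ?P c = F1 @ F2" "replicate (3*h) A = map fst F1"
    "B # (replicate (2*k-1) B @ Xr) = map fst F2"
    unfolding F1_def F2_def using lf mf take_map[of "3*h" fst "filter ?P c"] drop_map[of "3*h" fst "filter ?P c"]
    by simp_all
  obtain v F3 where F2: "F2 = v # F3" "fst v = B" using F(3) by (cases F2) auto
  from filter_split[OF F(1)] obtain c1 c2 where C: "c = c1 @ c2" "filter ?P c1 = F1" "filter ?P c2 = F2" by blast
  from filter_eq_ConsD[OF C(3)[unfolded F2(1)]] obtain us vs where
    U: "c2 = us @ v # vs" "\<forall>u\<in>set us. \<not> ?P u" "?P v" "F3 = filter ?P vs" by blast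
  let ?c1 = "c1 @ us"
  have fus: "filter ?P us = []" using U(2) by (simp add: filter_empty_conv)
  have r1: "redw ?c1 = replicate (3*h) A" using C(2) fus F(2)[symmetric] by (simp add: redw_def)
  have v: "v = (B, False)" using F2(2) U(3) by (cases v) auto
  have cc: "c = ?c1 @ v # vs" using C(1) U(1) by simp
  let ?y = "map fst ?c1"
  have yz: "?y @ (B # map fst vs) = replicate (3*h) A @ replicate (2*k) B @ concat (replicate j (Pw h k)) @ replicate (2*h) A @ replicate (3*k) B"
    using assms(4) cc v by simp
  from Dbound[OF yz h1] have D1: "k * count_list ?y A \<le> h * count_list ?y B + 3*h*k"
    and D2: "k * count_list ?y A = h * count_list ?y B + 3*h*k \<longrightarrow> count_list ?y B = 0 \<or> count_list ?y A = (5+j)*h"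
    by auto
  have ra: "count_list (redw ?c1) A = 3*h" unfolding r1 by simp
  have rb: "count_list (redw ?c1) B = 0" unfolding r1 by simp
  have ya: "count_list ?y A = 3*h + count_list ?c1 (A, True)" using cnt_split[of ?c1 A] ra by linarith
  have yb: "count_list ?y B = count_list ?c1 (B, True)" using cnt_split[of ?c1 B] rb by linarith
  have I: "h * count_list ?c1 (B, True) \<le> k * count_list ?c1 (A, True)"
    using binvD[OF assms(1) cc] by simp
  have Ek: "k * count_list ?y A = 3*h*k + k * count_list ?c1 (A, True)" unfolding ya by (simp add: algebra_simps)
  moreover have "h * count_list ?y B = h * count_list ?c1 (B, True)" using yb by simp
  ultimately have E: "k * count_list ?y A = h * count_list ?y B + 3*h*k" using D1 I by linarith
  have prefle: "count_list ?c1 (A, True) \<le> count_list c (A, True)" using cc by simp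
  have z: "count_list ?c1 (A, True) = 0 \<and> count_list ?c1 (B, True) = 0"
  proof (cases "count_list ?y B = 0")
    case True
    then have "count_list ?c1 (B, True) = 0" using yb by simp
    have "h * count_list ?y B = 0" using True by simp
    then have "k * count_list ?c1 (A, True) = 0" using E Ek by linarith
    then show ?thesis using h1 \<open>count_list ?c1 (B, True) = 0\<close> by simp
  next
    case False
    have "count_list ?y B = 0 \<or> count_list ?y A = (5+j)*h" using D2 E by (rule mp)
    then have "count_list ?y A = (5+j)*h" using False by (elim disjE) simp_all
    then have "count_list ?c1 (A, True) = (2+j)*h" using ya by (simp add: algebra_simps)
    then show ?thesis using prefle assms(6) by linarith
  qed
  then have "redw ?c1 = ?y" using bluefree by blast
  then have l1: "length ?c1 = 3*h" using r1 by (metis length_map length_replicate)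
  let ?p = "take (3*h+2*k) c"
  have pe: "?p = ?c1 @ take (2*k) (v # vs)" using cc l1 by simp
  have "map fst (v # vs) = replicate (2*k) B @ concat (replicate j (Pw h k)) @ replicate (2*h) A @ replicate (3*k) B"
  proof -
    have "drop (3*h) (map fst c) = map fst (v # vs)" using cc l1 by simp
    then show ?thesis using assms(4) by simp
  qed
  then have "map fst (take (2*k) (v # vs)) = replicate (2*k) B"
    using take_map[of "2*k" fst "v # vs"] by simp
  then have "count_list (take (2*k) (v # vs)) (A, True) = 0" using cA_le[of "take (2*k) (v # vs)" A] by simp
  then have pa: "count_list ?p (A, True) = 0" using pe z by simp
  have "0 < count_list ?p (B, True) \<longrightarrow> h \<le> count_list ?p (A, True)"
    using binvD[OF assms(1), of ?p "drop (3*h+2*k) c"] by simp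
  then have "count_list ?p (B, True) = 0" using pa h1 by simp
  with pa show ?thesis by simp
qed

lemma iter: "binv h k d \<Longrightarrow> 2 \<le> h \<Longrightarrow> 2 \<le> k \<Longrightarrow> redw d = concat (replicate n (Pw h k)) @ T \<Longrightarrow>
  map fst d = concat (replicate n (Pw h k)) @ Y' \<Longrightarrow> \<exists>d'. binv h k d' \<and> redw d' = T \<and> map fst d' = Y'"
proof (induction n arbitrary: d)
  case 0
  then show ?case by auto
next
  case (Suc n)
  let ?Xr = "concat (replicate n (Pw h k)) @ T"
  let ?Yr = "concat (replicate n (Pw h k)) @ Y'"
  have r: "redw d = Pw h k @ ?Xr" "map fst d = Pw h k @ ?Yr" using Suc.prems by simp_all
  from W2[OF Suc.prems(1-3) r(2) r(1)] have z: "count_list (take (h+k) d) (A, True) = 0"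
    "count_list (take (h+k) d) (B, True) = 0" by auto
  have lP: "length (Pw h k) = h + k" using len_Pw Suc.prems(2,3) by simp
  let ?d = "drop (h+k) d"
  have b: "binv h k ?d" using binv_strip[of h k "take (h+k) d" ?d] Suc.prems(1) z by simp
  have "redw d = take (h+k) (map fst d) @ redw ?d" using take2_red[OF z] .
  then have rd: "redw ?d = ?Xr" using r lP by simp
  have md: "map fst ?d = ?Yr" using r(2) lP by (simp add: drop_map[symmetric])
  from Suc.IH[OF b Suc.prems(2,3) rd md] show ?case .
qed



lemma cnt_S: "1 \<le> h \<Longrightarrow> 1 \<le> k \<Longrightarrow> count_list (S_word h k n) A = (5+n)*h \<and> count_list (S_word h k n) B = (5+n)*k"
  unfolding S_alt by (simp add: cnt_concat_rep cnt_Pw algebra_simps)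

theorem lemma3:
  fixes h k i j :: nat
  assumes "h \<ge> 2" and "k \<ge> 2" and "i \<ge> 1" and "j \<ge> 1"
  shows "ins_star {replicate h A @ replicate k B} (S_word h k i) (S_word h k j) \<longleftrightarrow> i = j"
proof
  assume "i = j"
  then show "ins_star {replicate h A @ replicate k B} (S_word h k i) (S_word h k j)"
    by (simp add: ins_star_def)
next
  assume "ins_star {replicate h A @ replicate k B} (S_word h k i) (S_word h k j)"
  from colored[OF this] obtain c where c: "map fst c = S_word h k j" "redw c = S_word h k i" "binv h k c"
    by blast
  have h1: "1 \<le> h" "1 \<le> k" using assms by auto
  have "count_list (map fst c) A = count_list (redw c) A + count_list c (A, True)" by (rule cnt_split)
  then have cA: "(5+j)*h = (5+i)*h + count_list c (A, True)" using c cnt_S[OF h1] by simp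
  then have "(5+i)*h \<le> (5+j)*h" by linarith
  then have "5 + i \<le> 5 + j" using h1 mult_le_cancel2[of "5+i" h "5+j"] by linarith
  then have "i \<le> j" by simp
  show "i = j"
  proof (rule ccontr)
    assume "i \<noteq> j"
    define m where "m = j - i"
    have m: "j = i + m" "1 \<le> m" using \<open>i \<le> j\<close> \<open>i \<noteq> j\<close> unfolding m_def by arith+
    let ?P = "Pw h k"
    let ?T = "replicate (2*h) A @ replicate (3*k) B"
    have "count_list c (A, True) = m*h" using cA m(1) by (simp add: algebra_simps)
    then have cl: "count_list c (A, True) < (2+j)*h" using m h1 by (simp add: algebra_simps)
    have Y: "map fst c = replicate (3*h) A @ replicate (2*k) B @ concat (replicate j ?P) @ ?T"
      using c(1) S_alt by simp
    have X: "redw c = replicate (3*h) A @ replicate (2*k) B @ (concat (replicate i ?P) @ ?T)"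
      using c(2) S_alt by simp
    from W1[OF c(3) assms(1,2) Y X cl] have z: "count_list (take (3*h+2*k) c) (A, True) = 0"
      "count_list (take (3*h+2*k) c) (B, True) = 0" by auto
    let ?d = "drop (3*h+2*k) c"
    have b: "binv h k ?d" using binv_strip[of h k "take (3*h+2*k) c" ?d] c(3) z by simp
    have "redw c = take (3*h+2*k) (map fst c) @ redw ?d" using take2_red[OF z] .
    then have rd: "redw ?d = concat (replicate i ?P) @ ?T" using X Y by simp
    have md: "map fst ?d = concat (replicate i ?P) @ (concat (replicate m ?P) @ ?T)"
      using Y m(1) by (simp add: drop_map[symmetric] replicate_add)
    from iter[OF b assms(1,2) rd md] obtain d' where d': "binv h k d'" "redw d' = ?T"
      "map fst d' = concat (replicate m ?P) @ ?T" by blast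
    obtain m' where "m = Suc m'" using m(2) by (cases m) auto
    then have md': "map fst d' = A # B # (replicate (h-1) A @ replicate (k-1) B @ concat (replicate m' ?P) @ ?T)"
      using d'(3) by (simp add: Pw_def)
    have "2*h = Suc (Suc (2*h - 2))" using assms(1) by simp
    then have rT: "?T = A # A # (replicate (2*h-2) A @ replicate (3*k) B)"
      by (metis replicate_Suc append_Cons)
    from L2[OF d'(1) assms(1) md'] rT d'(2) have z2: "count_list (take 2 d') (A, True) = 0"
      "count_list (take 2 d') (B, True) = 0" by auto
    have "redw d' = take 2 (map fst d') @ redw (drop 2 d')" using take2_red[OF z2] .
    then have "redw d' = A # B # redw (drop 2 d')" using md' by simp
    then show False using d'(2) rT by simp
  qed
qed

end
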